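(* Let $\|\cdot\|$ be a strictly convex norm on $\mathbb{R}^n$ that is continuously differentiable on $\mathbb{R}^n\setminus\{0\}$, with gradient $N(x)$ at $x\neq0$; set $h(x,y)=\|y\|-\langle y,N(x)\rangle$ for $x\ne0$ and $\sigma(x,t)=\max_{\|y\|\le t}h(x,x+y)$ for $x\ne 0$, $t>0$. Assume $\|\cdot\|$ is geometrically convex with constants $1,\Lambda$, where $\Lambda>2$, i.e. $\Lambda h(x,x+y)\le h(x,x+2y)$ whenever $x\ne 0$ and $\|y\|\le\|x\|$. Let $l_0,l_1,\bar l_0,\bar l_1\in\mathbb{R}^n$ satisfy $$\|l_1-\bar l_0\|\ge\|l_1-l_0\|,\quad \|\bar l_1-l_0\|\ge\|\bar l_1-\bar l_0\|,\quad \|l_1-l_0\|=\|\bar l_1-\bar l_0\|=1,$$ and let $l=[l_0,l_1]$, $\bar l=[\bar l_0,\bar l_1]$ denote the closed segments, $e=l_1-l_0$, $\bar e=\bar l_1-\bar l_0$. Assume $0<\delta<1/4$, $x_0\in\mathbb{R}^n$, and $$l\cap\bar B_\delta(x_0)\ne\emptyset,\qquad \bar l\cap \bar B_\delta(x_0)\neq\emptyset.$$ Assume moreover that $\rho>3\delta$, $l_1,l_0\notin\bar B_\rho(x_0)$, $\kappa\ge \frac{4}{\rho-3\delta}$, and $$\sigma(e,\kappa\delta)\le\sigma(\bar e,\kappa\delta).$$ Then $$h(\bar e,\bar l_1-l_0)+h(\bar e,l_1-\bar l_0)\le \frac{\Lambda}{\Lambda-2}\,\sigma(\bar e,\kapp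a\delta).$$
   Context: $\langle\cdot,\cdot\rangle$ is the Euclidean inner product; $\bar B_s(x_0)=\{x:\|x-x_0\|\le s\}$ is the closed ball in the norm $\|\cdot\|$. Strict convexity of the norm means: if $x,y\neq0$ and $\|x+y\|=\|x\|+\|y\|$, then $y=\alpha x$ for some $\alpha>0$. *)

theory Defs
  imports "HOL-Analysis.Analysis"
begin

definition is_norm :: "(real^'n \<Rightarrow> real) \<Rightarrow> bool" where
  "is_norm nrm \<longleftrightarrow>
     (\<forall>x. 0 \<le> nrm x) \<and> (\<forall>x. nrm x = 0 \<longleftrightarrow> x = 0) \<and>
     (\<forall>a x. nrm (a *\<^sub>R x) = \<bar>a\<bar> * nrm x) \<and>
     (\<forall>x y. nrm (x + y) \<le> nrm x + nrm y)"

definition strictly_convex_norm :: "(real^'n \<Rightarrow> real) \<Rightarrow> bool" where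
  "strictly_convex_norm nrm \<longleftrightarrow>
     (\<forall>x y. x \<noteq> 0 \<and> y \<noteq> 0 \<and> nrm (x + y) = nrm x + nrm y \<longrightarrow>
            (\<exists>\<alpha>>0. y = \<alpha> *\<^sub>R x))"

definition hfun :: "(real^'n \<Rightarrow> real) \<Rightarrow> (real^'n \<Rightarrow> real^'n) \<Rightarrow> real^'n \<Rightarrow> real^'n \<Rightarrow> real" where
  "hfun nrm N x y = nrm y - y \<bullet> N x"

text \<open>sigma(x,t) = max over ||y|| <= t of h(x,x+y) (the max is attained; written as Sup)\<close>
definition sigma :: "(real^'n \<Rightarrow> real) \<Rightarrow> (real^'n \<Rightarrow> real^'n) \<Rightarrow> real^'n \<Rightarrow> real \<Rightarrow> real" where
  "sigma nrm N x t = (SUP y\<in>{y. nrm y \<le> t}. hfun nrm N x (x + y))"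

definition geometrically_convex :: "(real^'n \<Rightarrow> real) \<Rightarrow> (real^'n \<Rightarrow> real^'n) \<Rightarrow> real \<Rightarrow> bool" where
  "geometrically_convex nrm N \<Lambda> \<longleftrightarrow>
     (\<forall>x y. x \<noteq> 0 \<and> nrm y \<le> nrm x \<longrightarrow>
        \<Lambda> * hfun nrm N x (x + y) \<le> hfun nrm N x (x + 2 *\<^sub>R y))"

definition nball :: "(real^'n \<Rightarrow> real) \<Rightarrow> real^'n \<Rightarrow> real \<Rightarrow> (real^'n) set" where
  "nball nrm x0 s = {x. nrm (x - x0) \<le> s}"

end

theory Submission imports Defs begin

lemma nrm_scale: "is_norm nrm \<Longrightarrow> nrm (a *\<^sub>R x) = \<bar>a\<bar> * nrm x"
  unfolding is_norm_def by blast
lemma nrm_tri: "is_norm nrm \<Longrightarrow> nrm (x + y) \<le> nrm x + nrm y"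
  unfolding is_norm_def by blast
lemma nrm_nonneg: "is_norm nrm \<Longrightarrow> 0 \<le> nrm x"
  unfolding is_norm_def by blast
lemma nrm_zero: "is_norm nrm \<Longrightarrow> nrm 0 = 0"
  unfolding is_norm_def by blast
lemma nrm_minus: "is_norm nrm \<Longrightarrow> nrm (- x) = nrm x"
  using nrm_scale[of nrm "-1" x] by simp
lemma nrm_diff: "is_norm nrm \<Longrightarrow> nrm (x - y) \<le> nrm x + nrm y"
  using nrm_tri[of nrm x "-y"] nrm_minus[of nrm y] by simp

lemma deriv_bounds:
  fixes nrm :: "real^'n \<Rightarrow> real"
  assumes norm: "is_norm nrm"
    and grad: "(nrm has_derivative (\<lambda>v. v \<bullet> Nx)) (at x)"
  shows "z \<bullet> Nx \<le> nrm (x + z) - nrm x" "nrm x - nrm (x - z) \<le> z \<bullet> Nx"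
proof -
  define f where "f = (\<lambda>t::real. nrm (x + t *\<^sub>R z))"
  have cv: "convex_on UNIV f"
  proof (rule convex_onI)
    fix t a b :: real assume t: "0 < t" "t < 1" "a \<in> UNIV" "b \<in> UNIV"
    have "x + ((1 - t) * a + t * b) *\<^sub>R z = (1 - t) *\<^sub>R (x + a *\<^sub>R z) + t *\<^sub>R (x + b *\<^sub>R z)"
      by (simp add: algebra_simps)
    hence "f ((1 - t) * a + t * b) = nrm ((1 - t) *\<^sub>R (x + a *\<^sub>R z) + t *\<^sub>R (x + b *\<^sub>R z))"
      unfolding f_def by simp
    also have "\<dots> \<le> nrm ((1 - t) *\<^sub>R (x + a *\<^sub>R z)) + nrm (t *\<^sub>R (x + b *\<^sub>R z))"
      by (rule nrm_tri[OF norm])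
    also have "\<dots> = (1 - t) * f a + t * f b"
      using t by (simp add: nrm_scale[OF norm] f_def)
    finally show "f ((1 - t) *\<^sub>R a + t *\<^sub>R b) \<le> (1 - t) * f a + t * f b" by simp
  qed simp
  have g: "((\<lambda>t::real. x + t *\<^sub>R z) has_derivative (\<lambda>t. t *\<^sub>R z)) (at 0)"
    by (auto intro!: derivative_eq_intros)
  have "((\<lambda>t. nrm (x + t *\<^sub>R z)) has_derivative (\<lambda>t. (t *\<^sub>R z) \<bullet> Nx)) (at 0)"
    using has_derivative_compose[OF g, of nrm] grad by fastforce
  hence d: "(f has_field_derivative (z \<bullet> Nx)) (at 0 within UNIV)"
    unfolding f_def by (rule has_derivative_imp_has_field_derivative) simp
  have 1: "f 1 - f 0 \<ge> (z \<bullet> Nx) * (1 - 0)"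
    by (rule convex_on_imp_above_tangent[OF cv]) (use d in auto)
  have 2: "f (-1) - f 0 \<ge> (z \<bullet> Nx) * (-1 - 0)"
    by (rule convex_on_imp_above_tangent[OF cv]) (use d in auto)
  show "z \<bullet> Nx \<le> nrm (x + z) - nrm x" using 1 by (simp add: f_def)
  show "nrm x - nrm (x - z) \<le> z \<bullet> Nx" using 2 by (simp add: f_def)
qed

lemma N_self:
  fixes nrm :: "real^'n \<Rightarrow> real"
  assumes norm: "is_norm nrm" and grad: "(nrm has_derivative (\<lambda>v. v \<bullet> Nx)) (at x)"
  shows "x \<bullet> Nx = nrm x"
proof -
  have "x + x = 2 *\<^sub>R x" by (simp add: scaleR_2)
  hence "nrm (x + x) = 2 * nrm x" using nrm_scale[OF norm, of 2 x] by simp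
  with deriv_bounds[OF norm grad, of x] show ?thesis by (simp add: nrm_zero[OF norm])
qed

lemma N_dual:
  fixes nrm :: "real^'n \<Rightarrow> real"
  assumes norm: "is_norm nrm" and grad: "(nrm has_derivative (\<lambda>v. v \<bullet> Nx)) (at x)"
  shows "z \<bullet> Nx \<le> nrm z"
  using deriv_bounds(1)[OF norm grad, of z] nrm_tri[OF norm, of x z] by simp


theorem theorem5p1:
  fixes nrm :: "real^'n \<Rightarrow> real" and N :: "real^'n \<Rightarrow> real^'n"
    and \<Lambda> \<delta> \<rho> \<kappa> :: real and l0 l1 lb0 lb1 x0 :: "real^'n"
  assumes norm: "is_norm nrm"
    and strict: "strictly_convex_norm nrm"
    and grad: "\<And>x. x \<noteq> 0 \<Longrightarrow> (nrm has_derivative (\<lambda>v. v \<bullet> N x)) (at x)"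
    and C1: "continuous_on (UNIV - {0}) N"
    and geo: "geometrically_convex nrm N \<Lambda>"
    and Lam: "\<Lambda> > 2"
    and h1: "nrm (l1 - lb0) \<ge> nrm (l1 - l0)"
    and h2: "nrm (lb1 - l0) \<ge> nrm (lb1 - lb0)"
    and h3: "nrm (l1 - l0) = 1" and h4: "nrm (lb1 - lb0) = 1"
    and del: "0 < \<delta>" "\<delta> < 1/4"
    and int1: "closed_segment l0 l1 \<inter> nball nrm x0 \<delta> \<noteq> {}"
    and int2: "closed_segment lb0 lb1 \<inter> nball nrm x0 \<delta> \<noteq> {}"
    and rho: "\<rho> > 3 * \<delta>"
    and out: "l1 \<notin> nball nrm x0 \<rho>" "l0 \<notin> nball nrm x0 \<rho>"
    and kap: "\<kappa> \<ge> 4 / (\<rho> - 3 * \<delta>)"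
    and sig: "sigma nrm N (l1 - l0) (\<kappa> * \<delta>) \<le> sigma nrm N (lb1 - lb0) (\<kappa> * \<delta>)"
  shows "hfun nrm N (lb1 - lb0) (lb1 - l0) + hfun nrm N (lb1 - lb0) (l1 - lb0)
           \<le> \<Lambda> / (\<Lambda> - 2) * sigma nrm N (lb1 - lb0) (\<kappa> * \<delta>)"

proof -
  define E where "E = lb1 - lb0"
  define e where "e = l1 - l0"
  define NE where "NE = N E"
  define phi where "phi = (\<lambda>v. nrm v - v \<bullet> NE)"
  define S where "S = sigma nrm N E (\<kappa> * \<delta>)"
  have phiH: "\<And>v. hfun nrm N E v = phi v" unfolding phi_def hfun_def NE_def by simp
  have nE: "nrm E = 1" using h4 E_def by simp
  have ne: "nrm e = 1" using h3 e_def by simp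
  have E0: "E \<noteq> 0" using nE nrm_zero[OF norm] by auto
  have gE: "(nrm has_derivative (\<lambda>v. v \<bullet> NE)) (at E)" using grad[OF E0] NE_def by simp
  have ENE: "E \<bullet> NE = 1" using N_self[OF norm gE] nE by simp
  have dual: "\<And>z. z \<bullet> NE \<le> nrm z" using N_dual[OF norm gE] .
  have phi_add: "\<And>x y. phi (x + y) \<le> phi x + phi y"
    unfolding phi_def using nrm_tri[OF norm] by (simp add: inner_add_left)
  have phi_scale: "\<And>c x. 0 \<le> c \<Longrightarrow> phi (c *\<^sub>R x) = c * phi x"
    unfolding phi_def by (simp add: nrm_scale[OF norm] algebra_simps)
  have phiE: "phi E = 0" unfolding phi_def using nE ENE by simp
  have phi_nn: "\<And>v. 0 \<le> phi v" unfolding phi_def using dual by (smt (verit))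
  have kpos: "\<kappa> > 0"
  proof -
    have "4 / (\<rho> - 3 * \<delta>) > 0" using rho by simp
    thus ?thesis using kap by linarith
  qed
  have Sbound: "phi (E + y) \<le> S" if "nrm y \<le> \<kappa> * \<delta>" for y
  proof -
    have bdd: "bdd_above ((\<lambda>y. hfun nrm N E (E + y)) ` {y. nrm y \<le> \<kappa> * \<delta>})"
    proof (rule bdd_aboveI2)
      fix z assume "z \<in> {y. nrm y \<le> \<kappa> * \<delta>}"
      hence z: "nrm z \<le> \<kappa> * \<delta>" by simp
      have "- ((E + z) \<bullet> NE) \<le> nrm (E + z)" using dual[of "-(E+z)"] nrm_minus[OF norm, of "E+z"] by (simp only: inner_minus_left)
      hence "phi (E + z) \<le> 2 * nrm (E + z)" unfolding phi_def by simp
      also have "\<dots> \<le> 2 * (1 + \<kappa> * \<delta>)" using nrm_tri[OF norm, of E z] nE z by simp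
      finally show "hfun nrm N E (E + z) \<le> 2 * (1 + \<kappa> * \<delta>)" using phiH by simp
    qed
    have "hfun nrm N E (E + y) \<le> S" unfolding S_def sigma_def
      by (rule cSUP_upper[OF _ bdd]) (use that in simp)
    thus ?thesis using phiH by simp
  qed
  obtain p where p: "p \<in> closed_segment l0 l1" "nrm (p - x0) \<le> \<delta>"
    using int1 unfolding nball_def by auto
  obtain s where s: "0 \<le> s" "s \<le> 1" "p = (1 - s) *\<^sub>R l0 + s *\<^sub>R l1"
    using p(1) unfolding closed_segment_def by auto
  obtain q where q: "q \<in> closed_segment lb0 lb1" "nrm (q - x0) \<le> \<delta>"
    using int2 unfolding nball_def by auto
  obtain t where t: "0 \<le> t" "t \<le> 1" "q = (1 - t) *\<^sub>R lb0 + t *\<^sub>R lb1"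
    using q(1) unfolding closed_segment_def by auto
  have pe: "p = l0 + s *\<^sub>R e" using s(3) unfolding e_def by (simp add: algebra_simps)
  have qE: "q = lb0 + t *\<^sub>R E" using t(3) unfolding E_def by (simp add: algebra_simps)
  define d where "d = q - p"
  have nd: "nrm d \<le> 2 * \<delta>"
  proof -
    have "d = (q - x0) - (p - x0)" unfolding d_def by simp
    thus ?thesis using nrm_diff[OF norm, of "q - x0" "p - x0"] p(2) q(2) by simp
  qed
  have rs1: "\<rho> < s + \<delta>"
  proof -
    have eq: "l0 - x0 = (p - x0) - s *\<^sub>R e" using pe by simp
    have "nrm ((p - x0) - s *\<^sub>R e) \<le> nrm (p - x0) + s" using nrm_diff[OF norm, of "p - x0" "s *\<^sub>R e"]
      nrm_scale[OF norm, of s e] ne s(1) by simp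
    hence "nrm (l0 - x0) \<le> nrm (p - x0) + s" by (simp only: eq)
    moreover have "\<not> nrm (l0 - x0) \<le> \<rho>" using out(2) unfolding nball_def by simp
    ultimately show ?thesis using p(2) by linarith
  qed
  have rs2: "\<rho> < 1 - s + \<delta>"
  proof -
    have eq: "l1 - x0 = (p - x0) + (1 - s) *\<^sub>R e" using pe unfolding e_def by (simp add: algebra_simps)
    have "nrm ((p - x0) + (1 - s) *\<^sub>R e) \<le> nrm (p - x0) + (1 - s)" using nrm_tri[OF norm, of "p - x0" "(1-s) *\<^sub>R e"]
      nrm_scale[OF norm, of "1-s" e] ne s(2) by simp
    hence "nrm (l1 - x0) \<le> nrm (p - x0) + (1 - s)" by (simp only: eq)
    moreover have "\<not> nrm (l1 - x0) \<le> \<rho>" using out(1) unfolding nball_def by simp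
    ultimately show ?thesis using p(2) by linarith
  qed
  define a where "a = lb1 - l0"
  define b where "b = l1 - lb0"
  have a_eq: "a = (1 - t) *\<^sub>R E + (s *\<^sub>R e + d)"
    unfolding a_def d_def pe qE E_def e_def by (simp add: algebra_simps)
  have b_eq: "b = t *\<^sub>R E + ((1 - s) *\<^sub>R e - d)"
    unfolding b_def d_def pe qE E_def e_def by (simp add: algebra_simps)
  have na: "nrm a \<ge> 1" using h2 h4 a_def by simp
  have nb: "nrm b \<ge> 1" using h1 h3 b_def by simp
  have ts1: "t \<le> s + 2 * \<delta>"
  proof -
    have "nrm a \<le> nrm ((1 - t) *\<^sub>R E) + nrm (s *\<^sub>R e + d)" using a_eq nrm_tri[OF norm] by simp
    also have "\<dots> \<le> (1 - t) + (s + nrm d)"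
      using nrm_tri[OF norm, of "s *\<^sub>R e" d] nrm_scale[OF norm] nE ne s t by simp
    finally show ?thesis using na nd by linarith
  qed
  have ts2: "s \<le> t + 2 * \<delta>"
  proof -
    have "nrm b \<le> nrm (t *\<^sub>R E) + nrm ((1 - s) *\<^sub>R e - d)" using b_eq nrm_tri[OF norm] by simp
    also have "\<dots> \<le> t + ((1 - s) + nrm d)"
      using nrm_diff[OF norm, of "(1 - s) *\<^sub>R e" d] nrm_scale[OF norm] nE ne s t by simp
    finally show ?thesis using nb nd by linarith
  qed
  define g where "g = e - E"
  define m where "m = 2 / \<kappa>"
  have mpos: "m > 0" using kpos m_def by simp
  have mk: "m * \<kappa> = 2" using kpos m_def by simp
  have mle: "m \<le> (\<rho> - 3 * \<delta>) / 2"
  proof -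
    have "4 \<le> \<kappa> * (\<rho> - 3 * \<delta>)" using kap rho by (simp add: pos_divide_le_eq)
    thus ?thesis using mk kpos unfolding m_def by (simp add: field_simps)
  qed
  have mle2: "2 * m \<le> \<rho> - 3 * \<delta>" using mle by simp
  define u where "u = 1 - 2 / \<Lambda>"
  have upos: "u > 0"
  proof -
    have "2 / \<Lambda> < 1" using Lam by simp
    thus ?thesis unfolding u_def by linarith
  qed
  have u1: "u < 1" using Lam u_def by simp
  have half: "phi (E + (1/2) *\<^sub>R g) \<le> (1 - u) / 2 * phi e"
  proof -
    have ng: "nrm ((1/2) *\<^sub>R g) \<le> nrm E"
      using nrm_diff[OF norm, of e E] nrm_scale[OF norm, of "1/2" g] nE ne g_def by simp
    have "\<Lambda> * hfun nrm N E (E + (1/2) *\<^sub>R g) \<le> hfun nrm N E (E + 2 *\<^sub>R ((1/2) *\<^sub>R g))"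
      using geo E0 ng unfolding geometrically_convex_def by blast
    moreover have "E + 2 *\<^sub>R ((1/2) *\<^sub>R g) = e" unfolding g_def by simp
    ultimately have "\<Lambda> * phi (E + (1/2) *\<^sub>R g) \<le> phi e" using phiH by simp
    hence "phi (E + (1/2) *\<^sub>R g) \<le> phi e / \<Lambda>" using Lam by (simp add: pos_le_divide_eq mult.commute)
    moreover have "(1 - u) / 2 * phi e = phi e / \<Lambda>" unfolding u_def by simp
    ultimately show ?thesis by simp
  qed
  have key: "phi (al *\<^sub>R E + c *\<^sub>R g) \<le> ((al - c) * (1 - u) + 2 * c - al) * phi e"
    if "c \<le> al" "al \<le> 2 * c" for al c
  proof -
    have "al *\<^sub>R E + c *\<^sub>R g = (2 * al - 2 * c) *\<^sub>R (E + (1/2) *\<^sub>R g) + (2 * c - al) *\<^sub>R (E + g)"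
      by (simp add: vec_eq_iff field_simps)
    also have "E + g = e" unfolding g_def by simp
    finally have "phi (al *\<^sub>R E + c *\<^sub>R g) \<le> (2 * al - 2 * c) * phi (E + (1/2) *\<^sub>R g) + (2 * c - al) * phi e"
      using phi_add phi_scale that by (smt (verit))
    also have "\<dots> \<le> (2 * al - 2 * c) * ((1 - u) / 2 * phi e) + (2 * c - al) * phi e"
      using half that by (intro add_right_mono mult_left_mono) auto
    also have "\<dots> = ((al - c) * (1 - u) + 2 * c - al) * phi e"
    proof -
      have "(2 * al - 2 * c) * ((1 - u) / 2 * phi e) = (al - c) * (1 - u) * phi e" by simp
      thus ?thesis by (simp add: algebra_simps)
    qed
    finally show ?thesis .
  qed
  have rem: "phi (m' *\<^sub>R E + w) \<le> m * S" if "m \<le> m'" "nrm w \<le> 2 * \<delta>" for m' w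
  proof -
    have eq1: "m' *\<^sub>R E + w = (m *\<^sub>R E + w) + (m' - m) *\<^sub>R E" by (simp add: algebra_simps)
    have "phi ((m *\<^sub>R E + w) + (m' - m) *\<^sub>R E) \<le> phi (m *\<^sub>R E + w) + phi ((m' - m) *\<^sub>R E)"
      by (rule phi_add)
    moreover have "phi ((m' - m) *\<^sub>R E) = 0" using phi_scale[of "m' - m" E] phiE that(1) by simp
    ultimately have 1: "phi (m' *\<^sub>R E + w) \<le> phi (m *\<^sub>R E + w)" unfolding eq1 by linarith
    have eq2: "m *\<^sub>R E + w = m *\<^sub>R (E + (1/m) *\<^sub>R w)" using mpos by (simp add: algebra_simps)
    have 2: "phi (m *\<^sub>R E + w) = m * phi (E + (1/m) *\<^sub>R w)" unfolding eq2
      by (rule phi_scale) (use mpos in linarith)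
    have "nrm ((1/m) *\<^sub>R w) = nrm w / m" using nrm_scale[OF norm, of "1/m" w] mpos by simp
    also have "\<dots> \<le> 2 * \<delta> / m" using that mpos by (simp add: divide_right_mono)
    also have "\<dots> = \<kappa> * \<delta>" using mk mpos by (simp add: field_simps)
    finally have "phi (E + (1/m) *\<^sub>R w) \<le> S" by (rule Sbound)
    hence "m * phi (E + (1/m) *\<^sub>R w) \<le> m * S" using mpos by simp
    thus ?thesis using 1 2 by linarith
  qed
  define al where "al = min (2 * s) (1 + s - t - m)"
  define be where "be = min (2 - 2 * s) (1 - s + t - m)"
  have al1: "al \<le> 2 * s" "al \<le> 1 + s - t - m" "al = 2 * s \<or> al = 1 + s - t - m"
    unfolding al_def by auto
  have be1: "be \<le> 2 - 2 * s" "be \<le> 1 - s + t - m" "be = 2 - 2 * s \<or> be = 1 - s + t - m"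
    unfolding be_def by auto
  have c1: "s \<le> al" "al \<le> 2 * s" "m \<le> 1 + s - t - al"
  proof -
    show "s \<le> al" using al1(3) ts1 ts2 rs1 rs2 mle2 s(1,2) rho del by (elim disjE) linarith+
    show "al \<le> 2 * s" by (rule al1(1))
    show "m \<le> 1 + s - t - al" using al1(2) by linarith
  qed
  have c2: "1 - s \<le> be" "be \<le> 2 * (1 - s)" "m \<le> 1 - s + t - be"
  proof -
    show "1 - s \<le> be" using be1(3) ts1 ts2 rs1 rs2 mle2 s(1,2) rho del by (elim disjE) linarith+
    show "be \<le> 2 * (1 - s)" using be1(1) by (simp add: algebra_simps)
    show "m \<le> 1 - s + t - be" using be1(2) by linarith
  qed
  have sig1: "al + be - 1 \<ge> 2 * m"
    using al1(3) be1(3)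
  proof (elim disjE)
    assume "al = 2 * s" "be = 2 - 2 * s" thus ?thesis using mle2 rs1 rs2 del rho s(1,2) by linarith
  next
    assume "al = 2 * s" "be = 1 - s + t - m" thus ?thesis using mle2 rs1 rs2 ts1 ts2 del rho s(1,2) by linarith
  next
    assume "al = 1 + s - t - m" "be = 2 - 2 * s" thus ?thesis using mle2 rs1 rs2 ts1 ts2 del rho s(1,2) by linarith
  next
    assume "al = 1 + s - t - m" "be = 1 - s + t - m" thus ?thesis using mle2 rs1 rs2 del rho s(1,2) by linarith
  qed
  have pa: "phi a \<le> ((al - s) * (1 - u) + 2 * s - al) * phi e + m * S"
  proof -
    have "a = (al *\<^sub>R E + s *\<^sub>R g) + ((1 + s - t - al) *\<^sub>R E + d)"
      unfolding a_eq g_def by (simp add: algebra_simps)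
    thus ?thesis using phi_add key[OF c1(1,2)] rem[OF c1(3) nd] by (smt (verit))
  qed
  have pb: "phi b \<le> ((be - (1 - s)) * (1 - u) + 2 * (1 - s) - be) * phi e + m * S"
  proof -
    have "b = (be *\<^sub>R E + (1 - s) *\<^sub>R g) + ((1 - s + t - be) *\<^sub>R E + (- d))"
      unfolding b_eq g_def by (simp add: algebra_simps)
    moreover have "nrm (- d) \<le> 2 * \<delta>" using nd nrm_minus[OF norm] by simp
    ultimately show ?thesis using phi_add key[OF c2(1,2)] rem[OF c2(3)] by (smt (verit))
  qed
  define T where "T = phi a + phi b"
  have Tge: "phi e \<le> T"
  proof -
    have "a + b = e + E" unfolding a_def b_def e_def E_def by simp
    hence "a \<bullet> NE + b \<bullet> NE = e \<bullet> NE + 1" using ENE by (metis inner_add_left)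
    thus ?thesis unfolding T_def phi_def using na nb ne by linarith
  qed
  define C where "C = 1 - (al + be - 1) * u"
  have TC: "T \<le> C * phi e + 2 * m * S"
    using pa pb unfolding T_def C_def by (simp add: algebra_simps)
  have Cnn: "C \<ge> 0"
  proof -
    have "al + be \<le> 2" using c1(3) c2(3) mpos by linarith
    hence "(al + be - 1) * u \<le> 1 * 1" using u1 upos sig1 mpos
      by (intro mult_mono) auto
    thus ?thesis unfolding C_def by simp
  qed
  have "C * phi e \<le> C * T" using Cnn Tge by (simp add: mult_left_mono)
  with TC have "(1 - C) * T \<le> 2 * m * S" by (simp add: algebra_simps)
  hence "(al + be - 1) * u * T \<le> 2 * m * S" unfolding C_def by simp
  moreover have "2 * m * u * T \<le> (al + be - 1) * u * T"
    using sig1 upos Tge phi_nn[of e] by (intro mult_right_mono) auto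
  ultimately have "2 * m * (u * T) \<le> 2 * m * S" by (simp add: algebra_simps)
  hence uT: "u * T \<le> S" using mpos by simp
  have "\<Lambda> / (\<Lambda> - 2) = 1 / u" unfolding u_def using Lam by (simp add: field_simps)
  hence "\<Lambda> / (\<Lambda> - 2) * S = S / u" by simp
  moreover have "T \<le> S / u" using uT upos by (simp add: field_simps)
  moreover have "hfun nrm N (lb1 - lb0) (lb1 - l0) + hfun nrm N (lb1 - lb0) (l1 - lb0) = T"
    unfolding T_def a_def b_def E_def[symmetric] using phiH by simp
  ultimately show ?thesis unfolding S_def E_def by simp
qed

end
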